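(* Let $\mathcal{G}_{k-1}=(V,E_{k-1})$ be an unweighted simple directed graph, let $e_k=(u_k,v_k)$ with $u_k\neq v_k$, $u_k,v_k\in V$, and $e_k\notin E_{k-1}$, and let $\mathcal{G}_k=(V,E_{k-1}\cup\{e_k\})$. Let $\Delta\mathcal{F}_k=\mathcal{F}(\mathcal{G}_k)\setminus\mathcal{F}(\mathcal{G}_{k-1})$ and $$\mathcal{F}(\mathcal{G}'_{k-1})=\{\phi\in\mathcal{F}(\mathcal{G}_{k-1}) : r_\phi(u_k)=u_k,\ r_\phi(v_k)\neq u_k\}.$$ Then for every spanning converging forest $\phi\in\Delta\mathcal{F}_k$, the forest $\phi'=\phi\setminus\{e_k\}$ belongs to $\mathcal{F}(\mathcal{G}'_{k-1})$, and the map $\phi\mapsto\phi\setminus\{e_k\}$ is a bijection from $\Delta\mathcal{F}_k$ onto $\mathcal{F}(\mathcal{G}'_{k-1})$.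
   Context: A rooted converging tree is a weakly connected digraph without cycles in which one node (the root) has out-degree $0$ and every other node has out-degree $1$ (an isolated node is such a tree rooted at itself). A spanning converging forest of a digraph $\mathcal{G}=(V,E)$ is a spanning subgraph (containing all of $V$ and a subset of $E$, identified with its edge set) whose weakly connected components are rooted converging trees. $\mathcal{F}(\mathcal{G})$ denotes the set of all spanning converging forests of $\mathcal{G}$. For a forest $\phi$ and node $i$, $r_\phi(i)$ denotes the root of the tree of $\phi$ containing $i$. *)

theory Defs
  imports Main
begin

definition simple_digraph :: "'a set \<Rightarrow> ('a \<times> 'a) set \<Rightarrow> bool" where
  "simple_digraph V E \<longleftrightarrow> finite V \<and> E \<subseteq> V \<times> V \<and> (\<forall>v. (v, v) \<notin> E)"

definition out_deg :: "('a \<times> 'a) set \<Rightarrow> 'a \<Rightarrow> nat" where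
  "out_deg F i = card {j. (i, j) \<in> F}"

definition weak_comp :: "'a set \<Rightarrow> ('a \<times> 'a) set \<Rightarrow> 'a \<Rightarrow> 'a set" where
  "weak_comp V F i = {j \<in> V. (i, j) \<in> (F \<union> F\<inverse>)\<^sup>*}"

definition spanning_converging_forest ::
  "'a set \<Rightarrow> ('a \<times> 'a) set \<Rightarrow> ('a \<times> 'a) set \<Rightarrow> bool" where
  "spanning_converging_forest V E F \<longleftrightarrow>
     F \<subseteq> E \<and> acyclic F \<and>
     (\<forall>i \<in> V. \<exists>!r. r \<in> weak_comp V F i \<and> out_deg F r = 0) \<and>
     (\<forall>i \<in> V. out_deg F i \<le> 1)"

definition forests :: "'a set \<Rightarrow> ('a \<times> 'a) set \<Rightarrow> ('a \<times> 'a) set set" where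
  "forests V E = {F. spanning_converging_forest V E F}"

definition root_of :: "('a \<times> 'a) set \<Rightarrow> 'a \<Rightarrow> 'a" where
  "root_of F i = (THE r. (i, r) \<in> F\<^sup>* \<and> out_deg F r = 0)"

end

theory Submission
  imports Defs
begin

definition func :: "('a \<times> 'a) set \<Rightarrow> bool" where
  "func F \<longleftrightarrow> (\<forall>a b c. (a,b) \<in> F \<longrightarrow> (a,c) \<in> F \<longrightarrow> b = c)"

definition sink :: "('a \<times> 'a) set \<Rightarrow> 'a \<Rightarrow> bool" where
  "sink F r \<longleftrightarrow> (\<forall>x. (r,x) \<notin> F)"

lemma fin_succ: "finite F \<Longrightarrow> finite {j. (i, j) \<in> F}"
proof -
  assume "finite F"
  have "{j. (i, j) \<in> F} \<subseteq> snd ` F" by force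
  then show ?thesis using \<open>finite F\<close> finite_subset by blast
qed

lemma out_deg0: "finite F \<Longrightarrow> out_deg F r = 0 \<longleftrightarrow> sink F r"
  using fin_succ[of F r] by (auto simp: out_deg_def sink_def)

lemma out_deg1: "finite F \<Longrightarrow> out_deg F i \<le> 1 \<longleftrightarrow> (\<forall>b c. (i,b) \<in> F \<longrightarrow> (i,c) \<in> F \<longrightarrow> b = c)"
  using fin_succ[of F i] unfolding out_deg_def
  by (simp add: card_le_Suc0_iff_eq)

lemma sink_exists:
  assumes "finite F" "acyclic F"
  shows "\<exists>r. (i,r) \<in> F\<^sup>* \<and> sink F r"
proof -
  have "wf (F\<inverse>)" using assms by (rule finite_acyclic_wf_converse)
  then show ?thesis
  proof (induction i rule: wf_induct_rule)
    case (less i)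
    show ?case
    proof (cases "\<exists>x. (i,x) \<in> F")
      case True
      then obtain x where x: "(i,x) \<in> F" by blast
      with less.IH[of x] obtain r where "(x,r) \<in> F\<^sup>*" "sink F r" by auto
      then show ?thesis using x by (meson converse_rtrancl_into_rtrancl)
    next
      case False then show ?thesis by (auto simp: sink_def)
    qed
  qed
qed

lemma sink_unique:
  assumes "func F" "(i,a) \<in> F\<^sup>*" "sink F a"
  shows "(i,b) \<in> F\<^sup>* \<Longrightarrow> sink F b \<Longrightarrow> a = b"
  using assms(2,3)
proof (induction i arbitrary: b rule: converse_rtrancl_induct)
  case base
  then show ?case by (metis converse_rtranclE sink_def)
next
  case (step i k)
  note ik = step(1) and ka = step(2) and IH = step.IH
  from step.prems(1) show ?case
  proof (cases rule: converse_rtranclE)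
    case base
    then show ?thesis using ik step.prems(2) by (auto simp: sink_def)
  next
    case (step c)
    then have ck: "c = k" using assms(1) ik by (auto simp: func_def)
    have "(k,b) \<in> F\<^sup>*" using step(2) ck by simp
    then show ?thesis using IH \<open>sink F b\<close> \<open>sink F a\<close> by blast
  qed
qed

lemma edge_sinks:
  assumes "func F" "(a,b) \<in> F"
  shows "((a,r) \<in> F\<^sup>* \<and> sink F r) \<longleftrightarrow> ((b,r) \<in> F\<^sup>* \<and> sink F r)"
proof
  assume h: "(a,r) \<in> F\<^sup>* \<and> sink F r"
  then have "(a,r) \<in> F\<^sup>*" by blast
  then show "(b,r) \<in> F\<^sup>* \<and> sink F r"
  proof (cases rule: converse_rtranclE)
    case base then show ?thesis using h assms by (auto simp: sink_def)
  next
    case (step c) then show ?thesis using h assms by (auto simp: func_def)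
  qed
next
  assume "(b,r) \<in> F\<^sup>* \<and> sink F r"
  then show "(a,r) \<in> F\<^sup>* \<and> sink F r" using assms
    by (meson converse_rtrancl_into_rtrancl)
qed

lemma weak_sinks:
  assumes "func F" "(i,j) \<in> (F \<union> F\<inverse>)\<^sup>*"
  shows "((i,r) \<in> F\<^sup>* \<and> sink F r) \<longleftrightarrow> ((j,r) \<in> F\<^sup>* \<and> sink F r)"
  using assms(2)
proof (induction j rule: rtrancl_induct)
  case base then show ?case by blast
next
  case (step j k)
  then show ?case using edge_sinks[OF assms(1), of j k r] edge_sinks[OF assms(1), of k j r]
    by blast
qed

lemma char:
  assumes "finite V" "E \<subseteq> V \<times> V"
  shows "F \<in> forests V E \<longleftrightarrow> F \<subseteq> E \<and> acyclic F \<and> func F"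
proof
  assume "F \<in> forests V E"
  then have h: "F \<subseteq> E" "acyclic F" "\<forall>i\<in>V. out_deg F i \<le> 1"
    unfolding forests_def spanning_converging_forest_def by auto
  have fin: "finite F" using h(1) assms finite_subset finite_cartesian_product by metis
  have "func F" unfolding func_def
  proof (intro allI impI)
    fix a b c assume "(a,b) \<in> F" "(a,c) \<in> F"
    then have "a \<in> V" using h(1) assms(2) by blast
    then show "b = c" using h(3) out_deg1[OF fin, of a] \<open>(a,b) \<in> F\<close> \<open>(a,c) \<in> F\<close> by blast
  qed
  then show "F \<subseteq> E \<and> acyclic F \<and> func F" using h by blast
next
  assume h: "F \<subseteq> E \<and> acyclic F \<and> func F"
  have FV: "F \<subseteq> V \<times> V" using h assms by blast
  have fin: "finite F" using FV assms finite_subset finite_cartesian_product by metis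
  have od: "\<forall>i\<in>V. out_deg F i \<le> 1" using out_deg1[OF fin] h by (auto simp: func_def)
  have "\<exists>!r. r \<in> weak_comp V F i \<and> out_deg F r = 0" if iV: "i \<in> V" for i
  proof -
    obtain r0 where r0: "(i,r0) \<in> F\<^sup>*" "sink F r0" using sink_exists[OF fin] h by blast
    have "r0 \<in> V" using r0(1) iV FV by (cases rule: rtranclE) auto
    moreover have "(i,r0) \<in> (F \<union> F\<inverse>)\<^sup>*" using r0(1) rtrancl_mono[of F "F \<union> F\<inverse>"] by blast
    ultimately have "r0 \<in> weak_comp V F i \<and> out_deg F r0 = 0"
      using r0 out_deg0[OF fin] by (auto simp: weak_comp_def)
    moreover have "r = r0" if "r \<in> weak_comp V F i \<and> out_deg F r = 0" for r
    proof -
      have s: "sink F r" using that out_deg0[OF fin] by blast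
      have "(i,r) \<in> (F \<union> F\<inverse>)\<^sup>*" using that by (auto simp: weak_comp_def)
      then have "(i,r) \<in> F\<^sup>*" using weak_sinks[of F i r r] h s by blast
      then show ?thesis using sink_unique[of F i r0 r] h r0 s by blast
    qed
    ultimately show ?thesis by blast
  qed
  note ex = this
  show "F \<in> forests V E"
    unfolding forests_def spanning_converging_forest_def mem_Collect_eq
  proof (intro conjI)
    show "F \<subseteq> E" "acyclic F" using h by auto
    show "\<forall>i\<in>V. out_deg F i \<le> 1" by (rule od)
    show "\<forall>i\<in>V. \<exists>!r. r \<in> weak_comp V F i \<and> out_deg F r = 0" using ex by blast
  qed
qed

lemma root_of_iff:
  assumes "finite F" "acyclic F" "func F"
  shows "root_of F i = r \<longleftrightarrow> (i,r) \<in> F\<^sup>* \<and> sink F r"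
proof -
  obtain r0 where r0: "(i,r0) \<in> F\<^sup>*" "sink F r0" using sink_exists[OF assms(1,2), of i] by blast
  have "root_of F i = r0" unfolding root_of_def
  proof (rule the_equality)
    show "(i, r0) \<in> F\<^sup>* \<and> out_deg F r0 = 0" using r0 out_deg0[OF assms(1), of r0] by simp
  next
    fix r assume "(i, r) \<in> F\<^sup>* \<and> out_deg F r = 0"
    then have "(i, r) \<in> F\<^sup>*" "sink F r" using out_deg0[OF assms(1)] by auto
    then show "r = r0" using sink_unique[of F i r0 r] r0 assms(3) by simp
  qed
  moreover have "r = r0" if "(i,r) \<in> F\<^sup>*" "sink F r" for r
    using sink_unique[of F i r0 r] r0 assms(3) that by simp
  ultimately show ?thesis using r0 by blast
qed

theorem lemma5p1:
  fixes V :: "'a set" and E :: "('a \<times> 'a) set" and u v :: 'a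
  assumes "simple_digraph V E"
    and "u \<in> V" and "v \<in> V" and "u \<noteq> v" and "(u, v) \<notin> E"
  shows "(\<forall>F \<in> forests V (E \<union> {(u, v)}) - forests V E.
            F - {(u, v)} \<in> {F' \<in> forests V E. root_of F' u = u \<and> root_of F' v \<noteq> u})
       \<and> bij_betw (\<lambda>F. F - {(u, v)}) (forests V (E \<union> {(u, v)}) - forests V E)
            {F' \<in> forests V E. root_of F' u = u \<and> root_of F' v \<noteq> u}"
proof -
  have finV: "finite V" and EV: "E \<subseteq> V \<times> V" using assms(1) by (auto simp: simple_digraph_def)
  have E'V: "E \<union> {(u,v)} \<subseteq> V \<times> V" using EV assms(2,3) by blast
  note cE = char[OF finV EV] and cE' = char[OF finV E'V]
  have finE: "finite F" if "F \<subseteq> E \<union> {(u,v)}" for F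
  proof -
    have "finite (V \<times> V)" using finV by simp
    then show ?thesis using finite_subset[OF subset_trans[OF that E'V]] by simp
  qed
  have P1: "F - {(u, v)} \<in> {F' \<in> forests V E. root_of F' u = u \<and> root_of F' v \<noteq> u}"
    if F: "F \<in> forests V (E \<union> {(u, v)}) - forests V E" for F
  proof -
    have h: "F \<subseteq> E \<union> {(u,v)}" "acyclic F" "func F" "\<not> F \<subseteq> E" using F cE[of F] cE'[of F] by auto
    have e: "(u,v) \<in> F" using h by blast
    define F' where "F' = F - {(u,v)}"
    have h': "F' \<subseteq> E" "acyclic F'" "func F'"
      using h acyclic_subset[of F F'] by (auto simp: F'_def func_def)
    have fin': "finite F'" using h'(1) by (intro finE) blast
    have su: "sink F' u" using h(3) e by (auto simp: sink_def F'_def func_def)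
    have r1: "root_of F' u = u" using root_of_iff[OF fin' h'(2,3)] su by blast
    have "root_of F' v \<noteq> u"
    proof
      assume "root_of F' v = u"
      then have "(v,u) \<in> F'\<^sup>*" using root_of_iff[OF fin' h'(2,3)] by blast
      then have "(v,u) \<in> F\<^sup>*" using rtrancl_mono[of F' F] by (auto simp: F'_def)
      then have "(u,u) \<in> F\<^sup>+" using e by (meson rtrancl_into_trancl2)
      then show False using h(2) by (auto simp: acyclic_def)
    qed
    then show ?thesis using r1 h' cE[of F'] by (auto simp: F'_def)
  qed
  have "bij_betw (\<lambda>F. F - {(u, v)}) (forests V (E \<union> {(u, v)}) - forests V E)
            {F' \<in> forests V E. root_of F' u = u \<and> root_of F' v \<noteq> u}"
    unfolding bij_betw_def
  proof (intro conjI)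
    show "inj_on (\<lambda>F. F - {(u, v)}) (forests V (E \<union> {(u, v)}) - forests V E)"
    proof (rule inj_onI)
      fix F1 F2 assume a: "F1 \<in> forests V (E \<union> {(u, v)}) - forests V E"
        "F2 \<in> forests V (E \<union> {(u, v)}) - forests V E" "F1 - {(u, v)} = F2 - {(u, v)}"
      have "(u,v) \<in> F1" "(u,v) \<in> F2" using a(1,2) cE[of F1] cE'[of F1] cE[of F2] cE'[of F2] by auto
      then show "F1 = F2" using a(3) by blast
    qed
  next
    show "(\<lambda>F. F - {(u, v)}) ` (forests V (E \<union> {(u, v)}) - forests V E) =
      {F' \<in> forests V E. root_of F' u = u \<and> root_of F' v \<noteq> u}"
    proof
      show "(\<lambda>F. F - {(u, v)}) ` (forests V (E \<union> {(u, v)}) - forests V E) \<subseteq>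
        {F' \<in> forests V E. root_of F' u = u \<and> root_of F' v \<noteq> u}" by (rule image_subsetI, rule P1)
    next
      show "{F' \<in> forests V E. root_of F' u = u \<and> root_of F' v \<noteq> u} \<subseteq>
        (\<lambda>F. F - {(u, v)}) ` (forests V (E \<union> {(u, v)}) - forests V E)"
      proof
        fix F' assume a: "F' \<in> {F' \<in> forests V E. root_of F' u = u \<and> root_of F' v \<noteq> u}"
        have h': "F' \<subseteq> E" "acyclic F'" "func F'" using a cE[of F'] by auto
        have fin': "finite F'" using h'(1) by (intro finE) blast
        have su: "sink F' u" using a root_of_iff[OF fin' h'(2,3)] by blast
        have nvu: "(v,u) \<notin> F'\<^sup>*" using a root_of_iff[OF fin' h'(2,3)] su by blast
        define F where "F = insert (u,v) F'"
        have "F \<subseteq> E \<union> {(u,v)}" using h' by (auto simp: F_def)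
        moreover have "acyclic F" using h'(2) nvu by (simp add: F_def acyclic_insert)
        moreover have "func F" using h'(3) su by (auto simp: F_def func_def sink_def)
        moreover have "\<not> F \<subseteq> E" using assms(5) by (auto simp: F_def)
        ultimately have "F \<in> forests V (E \<union> {(u, v)}) - forests V E" using cE[of F] cE'[of F] by blast
        moreover have "F' = F - {(u,v)}" using h'(1) assms(5) by (auto simp: F_def)
        ultimately show "F' \<in> (\<lambda>F. F - {(u, v)}) ` (forests V (E \<union> {(u, v)}) - forests V E)"
          by blast
      qed
    qed
  qed
  then show ?thesis using P1 by blast
qed

end
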